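(* Let $p\geq 5$ be an integer and $s=\frac1p$. There exist integers $n_0,n_1>0$ such that $[A_{n,s}^{-1}]=\left[2\left(n-\frac12\right)^s\right]$ for every even integer $n\geq n_0$, and $[B_{n,s}^{-1}]=\left[-2\left(n-\frac12\right)^s\right]$ for every odd integer $n\geq n_1$.
   Context: For an integer $n\geq1$ and real $0<s<1$: $A_{n,s}=\left(\frac{1}{n^s}-\frac{1}{(n+1)^s}\right)+\left(\frac{1}{(n+2)^s}-\frac{1}{(n+3)^s}\right)+\cdots$ and $B_{n,s}=\left(-\frac{1}{n^s}+\frac{1}{(n+1)^s}\right)+\left(-\frac{1}{(n+2)^s}+\frac{1}{(n+3)^s}\right)+\cdots$, i.e. $A_{n,s}=\sum_{k\geq 0}\frac{(-1)^k}{(n+k)^s}$ and $B_{n,s}=-A_{n,s}$. $[x]$ denotes the integer part (floor) of $x$. *)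

theory Defs
  imports "HOL-Analysis.Analysis"
begin

definition A_ns :: "nat \<Rightarrow> real \<Rightarrow> real" where
  "A_ns n s = (\<Sum>k. (-1) ^ k / (real (n + k)) powr s)"

definition B_ns :: "nat \<Rightarrow> real \<Rightarrow> real" where
  "B_ns n s = (\<Sum>k. (-1) ^ (k + 1) / (real (n + k)) powr s)"

end

theory Submission
  imports Defs "HOL-Real_Asymp.Real_Asymp"
begin


lemma taylor3:
  fixes s u :: real assumes s0: "0 < s" and s1: "s \<le> 1" and u: "\<bar>u\<bar> \<le> 1/2"
  shows "\<bar>(1+u) powr (-s) - (1 - s*u + s*(s+1)/2*u^2)\<bar> \<le> 16*\<bar>u\<bar>^3"
proof (cases "u = 0")
  case True then show ?thesis by simp
next
  case False
  define diff where "diff = (\<lambda>m (v::real). (-1)^m * pochhammer s m * (1+v) powr (-s - real m))"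
  have D: "\<forall>m t. m < 3 \<and> -1/2 \<le> t \<and> t \<le> 1/2 \<longrightarrow> DERIV (diff m) t :> diff (Suc m) t"
  proof (intro allI impI)
    fix m :: nat and t :: real assume "m < 3 \<and> -1/2 \<le> t \<and> t \<le> 1/2"
    then have t: "1 + t > 0" by auto
    have "DERIV (\<lambda>v. (1+v) powr (-s - real m)) t :> (-s - real m) * (1+t) powr (-s - real m - 1)"
      using t by (auto intro!: derivative_eq_intros)
    then have "DERIV (\<lambda>v. (-1)^m * pochhammer s m * (1+v) powr (-s - real m)) t :> 
       (-1)^m * pochhammer s m * ((-s - real m) * (1+t) powr (-s - real m - 1))"
      by (rule DERIV_cmult)
    moreover have "(-1)^m * pochhammer s m * ((-s - real m) * (1+t) powr (-s - real m - 1)) = diff (Suc m) t"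
      unfolding diff_def by (simp add: pochhammer_Suc algebra_simps)
    ultimately show "DERIV (diff m) t :> diff (Suc m) t" unfolding diff_def by simp
  qed
  have "\<exists>t. (if u < 0 then u < t \<and> t < 0 else 0 < t \<and> t < u) \<and>
    (1+u) powr (-s) = (\<Sum>m<3. (diff m 0 / fact m) * (u - 0)^m) + (diff 3 t / fact 3) * (u - 0)^3"
    using Taylor[of 3 diff "\<lambda>v. (1+v) powr (-s)" "-1/2" "1/2" 0 u, OF _ _ D] u False
    by (auto simp: diff_def)
  then obtain t where t: "(if u < 0 then u < t \<and> t < 0 else 0 < t \<and> t < u)"
    and eq: "(1+u) powr (-s) = (\<Sum>m<3. (diff m 0 / fact m) * (u - 0)^m) + (diff 3 t / fact 3) * (u - 0)^3"
    by blast
  have tb: "1/2 \<le> 1 + t" using t u by (auto split: if_splits)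
  have sum3: "(\<Sum>m<3. (diff m 0 / fact m) * (u - 0)^m) = 1 - s*u + s*(s+1)/2*u^2"
    by (simp add: diff_def numeral_3_eq_3 pochhammer_Suc power2_eq_square fact_numeral)
  have d3: "diff 3 t = - (s*(s+1)*(s+2)) * (1+t) powr (-s-3)"
    by (simp add: diff_def numeral_3_eq_3 pochhammer_Suc algebra_simps)
  have p1: "(1+t) powr (-s-3) \<le> (1/2) powr (-s-3)"
    using tb s0 by (intro powr_mono2') auto
  have p2: "(1/2::real) powr (-s-3) = 2 powr (s+3)"
  proof -
    have "-s-3 = -(s+3)" by simp
    then show ?thesis by (simp only: powr_divide powr_minus_divide) simp
  qed
  have p3: "(2::real) powr (s+3) \<le> 2 powr 4" using s1 by (intro powr_mono) auto
  have p4: "(2::real) powr 4 = 16" by simp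
  have c: "s*(s+1)*(s+2) \<le> 6"
  proof -
    have "s*(s+1) \<le> 1*2" using s0 s1 by (intro mult_mono) auto
    then have "s*(s+1)*(s+2) \<le> 2*3" using s0 s1 by (intro mult_mono) auto
    then show ?thesis by simp
  qed
  have cpos: "0 \<le> s*(s+1)*(s+2)" using s0 by simp
  have pp: "0 \<le> (1+t) powr (-s-3)" by simp
  have "\<bar>diff 3 t\<bar> \<le> 6 * 16"
  proof -
    have "\<bar>diff 3 t\<bar> = (s*(s+1)*(s+2)) * (1+t) powr (-s-3)" using d3 cpos pp s0 by (simp add: abs_mult)
    also have "\<dots> \<le> 6 * 16" using p1 p2 p3 p4 c cpos pp by (intro mult_mono) auto
    finally show ?thesis .
  qed
  then have "\<bar>(diff 3 t / fact 3) * (u - 0)^3\<bar> \<le> 16 * \<bar>u\<bar>^3"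
    by (simp add: abs_mult fact_numeral power_abs mult_right_mono)
  then show ?thesis using eq sum3 by simp
qed
lemma shift_powr:
  fixes x a s :: real assumes "x > 0" "x + a > 0"
  shows "(x+a) powr (-s) = x powr (-s) * (1 + a*(1/x)) powr (-s)"
proof -
  have "x + a = x * (1 + a*(1/x))" using assms by (simp add: field_simps)
  moreover have "1 + a*(1/x) > 0" using assms by (simp add: field_simps)
  ultimately show ?thesis using assms by (simp add: powr_mult)
qed

lemma ebound:
  fixes s x :: real assumes s0: "0 < s" and s1: "s \<le> 1" and x: "3 \<le> x"
  shows "\<bar>x powr (-s) - (x+1) powr (-s) - (x + (-1/2)) powr (-s) / 2 + (x + 3/2) powr (-s) / 2\<bar>
          \<le> 44 * x powr (-s) * (1/x)^3"
proof -
  define t where "t = 1/x"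
  have t0: "0 < t" "t \<le> 1/3" using x by (auto simp: t_def field_simps)
  define P where "P = (\<lambda>a. 1 - s*(a*t) + s*(s+1)/2*(a*t)^2)"
  define R where "R = (\<lambda>a. (1 + a*t) powr (-s) - P a)"
  have RB: "\<bar>R a\<bar> \<le> 16*\<bar>a*t\<bar>^3" if "\<bar>a*t\<bar> \<le> 1/2" for a
    unfolding R_def P_def using taylor3[OF s0 s1 that] by simp
  have R1: "\<bar>R 1\<bar> \<le> 16*t^3" using RB[of 1] t0 by simp
  have R2: "\<bar>R (-1/2)\<bar> \<le> 16*(t/2)^3" using RB[of "-1/2"] t0 by (simp add: abs_mult power_mult_distrib)
  have R3: "\<bar>R (3/2)\<bar> \<le> 16*(3*t/2)^3" using RB[of "3/2"] t0 by (simp add: abs_mult power_mult_distrib)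
  have xp: "x > 0" using x by simp
  have e1: "(x+1) powr (-s) = x powr (-s) * (P 1 + R 1)"
    using shift_powr[of x 1 s] xp by (simp add: R_def t_def)
  have e2: "(x + (-1/2)) powr (-s) = x powr (-s) * (P (-1/2) + R (-1/2))"
    using shift_powr[of x "-1/2" s] xp x by (simp add: R_def t_def)
  have e3: "(x + 3/2) powr (-s) = x powr (-s) * (P (3/2) + R (3/2))"
    using shift_powr[of x "3/2" s] xp x by (simp add: R_def t_def)
  have poly: "1 - P 1 - P (-1/2) / 2 + P (3/2) / 2 = 0"
    by (simp add: P_def power2_eq_square field_simps)
  have "x powr (-s) - (x+1) powr (-s) - (x + (-1/2)) powr (-s) / 2 + (x + 3/2) powr (-s) / 2
       = x powr (-s) * ((1 - P 1 - P (-1/2) / 2 + P (3/2) / 2) - R 1 - R (-1/2) / 2 + R (3/2) / 2)"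
    unfolding e1 e2 e3 by (simp add: field_simps)
  also have "\<dots> = x powr (-s) * (- R 1 - R (-1/2) / 2 + R (3/2) / 2)" using poly by simp
  finally have eq: "x powr (-s) - (x+1) powr (-s) - (x + (-1/2)) powr (-s) / 2 + (x + 3/2) powr (-s) / 2
       = x powr (-s) * (- R 1 - R (-1/2) / 2 + R (3/2) / 2)" .
  have "\<bar>- R 1 - R (-1/2) / 2 + R (3/2) / 2\<bar> \<le> \<bar>R 1\<bar> + \<bar>R (-1/2)\<bar> / 2 + \<bar>R (3/2)\<bar> / 2"
    by simp
  also have "\<dots> \<le> 16*t^3 + 16*(t/2)^3/2 + 16*(3*t/2)^3/2" using R1 R2 R3 by simp
  also have "\<dots> = 44 * t^3" by (simp add: power_mult_distrib power_divide)
  finally have b: "\<bar>- R 1 - R (-1/2) / 2 + R (3/2) / 2\<bar> \<le> 44 * t^3" .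
  have "x powr (-s) * \<bar>- R 1 - R (-1/2) / 2 + R (3/2) / 2\<bar> \<le> x powr (-s) * (44 * t^3)"
    using b by (intro mult_left_mono) auto
  then show ?thesis unfolding eq t_def[symmetric] by (simp add: abs_mult)
qed
lemma cube_tel:
  fixes x :: real assumes x: "3 \<le> x"
  shows "44 * (1/x)^3 \<le> 11 / (x-1)^2 - 11 / (x+1)^2"
proof -
  have x0: "x > 1" using x by simp
  have a: "11 / (x-1)^2 - 11 / (x+1)^2 = 44 * x / (x^2-1)^2"
  proof -
    have p: "(x-1)^2 \<noteq> 0" "(x+1)^2 \<noteq> 0" using x0 by auto
    have "11 / (x-1)^2 - 11 / (x+1)^2 = (11*(x+1)^2 - (x-1)^2*11) / ((x-1)^2*(x+1)^2)"
      using p by (simp add: diff_frac_eq)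
    also have "(11*(x+1)^2 - (x-1)^2*11) = 44 * x" by algebra
    also have "(x-1)^2*(x+1)^2 = (x^2-1)^2" by algebra
    finally show ?thesis .
  qed
  have "1 < x*x" using less_1_mult x0 by blast
  then have b: "0 < (x^2-1)^2" by (simp add: power2_eq_square)
  have c1: "(x^2-1)^2 = x^4 - (2*x^2 - 1)" by algebra
  have "2*x^2 - 1 \<ge> 0" using \<open>1 < x*x\<close> by (simp add: power2_eq_square)
  then have c: "(x^2-1)^2 \<le> x^4" using c1 by linarith
  have "44 * (1/x)^3 = 44 * x / x^4" using x0 by (simp add: field_simps power4_eq_xxxx power3_eq_cube)
  also have "\<dots> \<le> 44 * x / (x^2-1)^2" using b c x0 by (intro divide_left_mono) auto
  finally show ?thesis using a by simp
qed

lemma A_bound: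
  fixes s :: real and n :: nat
  assumes s0: "0 < s" and s1: "s \<le> 1" and n: "3 \<le> n"
  shows "summable (\<lambda>k. (-1) ^ k / (real (n + k)) powr s)"
    and "\<bar>(\<Sum>k. (-1) ^ k / (real (n + k)) powr s) - (real n - 1/2) powr (-s) / 2\<bar>
           \<le> 11 * real n powr (-s) / (real n - 1)^2"
proof -
  define a where "a = (\<lambda>k. 1 / (real (n + k)) powr s)"
  define g where "g = (\<lambda>k. (-1) ^ k / (real (n + k)) powr s)"
  have ga: "g = (\<lambda>k. (-1)^k * a k)" by (auto simp: g_def a_def)
  have ninf: "LIM k sequentially. real (n + k) :> at_top" by real_asymp
  have a0: "a \<longlonglongrightarrow> 0"
  proof -
    have "(\<lambda>k. real (n + k) powr (-s)) \<longlonglongrightarrow> 0" using s0 by (intro tendsto_neg_powr ninf) auto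
    then show ?thesis unfolding a_def using n by (simp add: powr_minus_divide)
  qed
  have apos: "\<And>k. 0 \<le> a k" by (simp add: a_def)
  have amono: "\<And>k. a (Suc k) \<le> a k"
  proof -
    fix k
    have "real (n + k) powr s \<le> real (n + Suc k) powr s" using s0 by (intro powr_mono2) auto
    moreover have "0 < real (n + k) powr s" using n by simp
    ultimately show "a (Suc k) \<le> a k" unfolding a_def by (intro divide_left_mono) auto
  qed
  have sg: "summable g" unfolding ga by (rule summable_Leibniz'(1)[OF a0 apos amono])
  then show "summable (\<lambda>k. (-1) ^ k / (real (n + k)) powr s)" by (simp add: g_def)
  define A where "A = suminf g"
  have gs: "g sums A" using sg by (simp add: A_def summable_sums)
  have grp: "(\<lambda>j. sum g {j*2..<j*2+2}) sums A" by (rule sums_group[OF gs]) simp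
  define G where "G = (\<lambda>x::real. x powr (-s))"
  have grp_eq: "sum g {j*2..<j*2+2} = G (real (n+2*j)) - G (real (n+2*j) + 1)" for j
  proof -
    have "{j*2..<j*2+2} = {2*j, 2*j+1}" by auto
    then have "sum g {j*2..<j*2+2} = g (2*j) + g (2*j+1)" by simp
    also have "\<dots> = G (real (n+2*j)) - G (real (n+2*j) + 1)"
      by (simp add: g_def G_def powr_minus_divide add_ac)
    finally show ?thesis .
  qed
  define H where "H = (\<lambda>j::nat. (real (n+2*j) - 1/2) powr (-s) / 2)"
  have H0: "H \<longlonglongrightarrow> 0"
  proof -
    have "LIM j sequentially. real (n+2*j) - 1/2 :> at_top" by real_asymp
    then have "(\<lambda>j. (real (n+2*j) - 1/2) powr (-s)) \<longlonglongrightarrow> 0" using s0 by (intro tendsto_neg_powr) auto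
    then show ?thesis unfolding H_def by (intro tendsto_divide_zero)
  qed
  have Hs: "(\<lambda>j. H j - H (Suc j)) sums (H 0 - 0)" by (rule telescope_sums'[OF H0])
  define E where "E = (\<lambda>j. sum g {j*2..<j*2+2} - (H j - H (Suc j)))"
  have Es: "E sums (A - H 0)" unfolding E_def using sums_diff[OF grp Hs] by simp
  define S where "S = (\<lambda>j::nat. 11 * real n powr (-s) / (real (n+2*j) - 1)^2)"
  have S0: "S \<longlonglongrightarrow> 0"
  proof -
    have "(\<lambda>j::nat. 1 / (real (n+2*j) - 1)^2) \<longlonglongrightarrow> 0" by real_asymp
    then have "(\<lambda>j::nat. (11 * real n powr (-s)) * (1 / (real (n+2*j) - 1)^2)) \<longlonglongrightarrow> 0"
      by (rule tendsto_mult_right_zero)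
    then show ?thesis unfolding S_def by simp
  qed
  have Ss: "(\<lambda>j. S j - S (Suc j)) sums (S 0 - 0)" by (rule telescope_sums'[OF S0])
  have EB: "\<bar>E j\<bar> \<le> S j - S (Suc j)" for j
  proof -
    define x where "x = real (n+2*j)"
    have x3: "3 \<le> x" using n by (simp add: x_def)
    have HS: "H (Suc j) = (x + 3/2) powr (-s) / 2" by (simp add: H_def x_def add_ac)
    have Hj: "H j = (x + (-1/2)) powr (-s) / 2" by (simp add: H_def x_def)
    have "E j = x powr (-s) - (x+1) powr (-s) - (x + (-1/2)) powr (-s) / 2 + (x + 3/2) powr (-s) / 2"
      unfolding E_def grp_eq HS Hj by (simp add: G_def x_def)
    then have "\<bar>E j\<bar> \<le> 44 * x powr (-s) * (1/x)^3" using ebound[OF s0 s1 x3] by simp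
    also have "\<dots> \<le> 44 * real n powr (-s) * (1/x)^3"
      using s0 n x3 by (intro mult_right_mono mult_left_mono powr_mono2') (auto simp: x_def)
    also have "\<dots> = real n powr (-s) * (44 * (1/x)^3)" by simp
    also have "\<dots> \<le> real n powr (-s) * (11 / (x-1)^2 - 11 / (x+1)^2)"
      by (intro mult_left_mono cube_tel x3) auto
    also have "\<dots> = S j - S (Suc j)"
      by (simp add: S_def x_def field_simps)
    finally show ?thesis .
  qed
  have u1: "A - H 0 \<le> S 0 - 0" using EB by (intro sums_le[OF _ Es Ss]) (simp add: abs_le_iff)
  have u2: "-(A - H 0) \<le> S 0 - 0" using EB by (intro sums_le[OF _ sums_minus[OF Es] Ss]) (simp add: abs_le_iff)
  have "\<bar>A - H 0\<bar> \<le> S 0" using u1 u2 by simp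
  then show "\<bar>(\<Sum>k. (-1) ^ k / (real (n + k)) powr s) - (real n - 1/2) powr (-s) / 2\<bar>
           \<le> 11 * real n powr (-s) / (real n - 1)^2"
    by (simp add: A_def g_def H_def S_def)
qed




lemma int_pow_ne:
  fixes m :: int and p n :: nat assumes p: "p \<ge> 2"
  shows "m ^ p \<noteq> 2^(p-1) * (2 * int n - 1)"
proof
  assume eq: "m ^ p = 2^(p-1) * (2 * int n - 1)"
  show False
  proof (cases "even m")
    case True
    then obtain k where k: "m = 2*k" by blast
    have pp: "(2::int)^p = 2^(p-1) * 2" using p by (simp flip: power_Suc2)
    have "m^p = 2^(p-1) * (2 * k^p)" unfolding k power_mult_distrib pp by simp
    with eq have e2: "2 * k^p = 2 * int n - 1" by simp
    have "even (2 * k^p)" by simp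
    then have "even (2 * int n - 1)" by (simp only: e2)
    then show False by simp
  next
    case False
    then have "odd (m^p)" by simp
    moreover have "even (2^(p-1) * (2 * int n - 1) :: int)" using p by simp
    ultimately show False using eq by simp
  qed
qed

lemma floor_close:
  fixes y z E :: real assumes g: "\<forall>m::int. E < \<bar>y - of_int m\<bar>" and c: "\<bar>z - y\<bar> \<le> E"
  shows "floor z = floor y"
proof -
  define m where "m = floor y"
  have m1: "of_int m \<le> y" "y < of_int m + 1" unfolding m_def by linarith+
  have "E < \<bar>y - of_int m\<bar>" using g by blast
  then have a: "of_int m < z" using m1 c by linarith
  have "E < \<bar>y - of_int (m+1)\<bar>" using g by blast
  then have b: "z < of_int m + 1" using m1 c by linarith
  show ?thesis unfolding m_def[symmetric] using a b by (intro floor_unique) auto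
qed






lemma gap_lemma:
  fixes y :: real and m :: int and p n :: nat
  assumes p: "p \<ge> 2" and y1: "1 \<le> y" and yp: "y^p = of_int (2^(p-1) * (2 * int n - 1))"
    and close: "\<bar>y - of_int m\<bar> < 1"
  shows "1 / (real p * (2*y)^(p-1)) \<le> \<bar>y - of_int m\<bar>"
proof -
  have mpos: "0 < real_of_int m" using close y1 by linarith
  have mle: "real_of_int m \<le> y + 1" using close by linarith
  have ne: "m ^ p \<noteq> 2^(p-1) * (2 * int n - 1)" by (rule int_pow_ne[OF p])
  have "1 \<le> \<bar>m ^ p - 2^(p-1) * (2 * int n - 1)\<bar>" using ne by linarith
  then have "1 \<le> \<bar>real_of_int (m ^ p) - real_of_int (2^(p-1) * (2 * int n - 1))\<bar>"
    by (metis of_int_1_le_iff of_int_abs of_int_diff)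
  then have one: "1 \<le> \<bar>y^p - (real_of_int m)^p\<bar>" using yp by (simp add: abs_minus_commute)
  have fact: "y^p - (real_of_int m)^p = (y - of_int m) * (\<Sum>i<p. (real_of_int m)^(p - Suc i) * y^i)"
    by (rule power_diff_sumr2)
  have sb: "(\<Sum>i<p. (real_of_int m)^(p - Suc i) * y^i) \<le> real p * (2*y)^(p-1)"
  proof -
    have "(\<Sum>i<p. (real_of_int m)^(p - Suc i) * y^i) \<le> of_nat (card {..<p}) * (2*y)^(p-1)"
    proof (rule sum_bounded_above)
      fix i assume i: "i \<in> {..<p}"
      have "(real_of_int m)^(p - Suc i) * y^i \<le> (2*y)^(p - Suc i) * (2*y)^i"
        using mpos mle y1 by (intro mult_mono power_mono) auto
      also have "\<dots> = (2*y)^(p - Suc i + i)" by (rule power_add[symmetric])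
      also have "p - Suc i + i = p - 1" using i by simp
      finally show "(real_of_int m)^(p - Suc i) * y^i \<le> (2*y)^(p-1)" .
    qed
    then show ?thesis by simp
  qed
  have s0: "0 \<le> (\<Sum>i<p. (real_of_int m)^(p - Suc i) * y^i)" using mpos y1 by (intro sum_nonneg) auto
  have "1 \<le> \<bar>y - of_int m\<bar> * (\<Sum>i<p. (real_of_int m)^(p - Suc i) * y^i)"
    using one unfolding fact by (simp add: abs_mult s0)
  also have "\<dots> \<le> \<bar>y - of_int m\<bar> * (real p * (2*y)^(p-1))" by (intro mult_left_mono sb) auto
  finally have "1 \<le> \<bar>y - of_int m\<bar> * (real p * (2*y)^(p-1))" .
  moreover have "0 < real p * (2*y)^(p-1)" using p y1 by simp
  ultimately show ?thesis by (simp add: divide_simps)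
qed


lemma main_est:
  fixes p n :: nat and s :: real
  assumes p: "p \<ge> 5" and s: "s = 1 / real p" and n: "n \<ge> 100 * p * 4^p"
  shows "\<forall>m::int. 44 * (2 * (real n - 1/2) powr s) / (real n - 1)^2 < \<bar>2 * (real n - 1/2) powr s - of_int m\<bar>"
    and "\<bar>inverse (A_ns n s) - 2 * (real n - 1/2) powr s\<bar> \<le> 44 * (2 * (real n - 1/2) powr s) / (real n - 1)^2"
    and "summable (\<lambda>k. (-1) ^ k / (real (n + k)) powr s)"
proof -
  define y where "y = 2 * (real n - 1/2) powr s"
  define w where "w = real n - 1/2"
  define E where "E = 44 * y / (real n - 1)^2"
  define K where "K = real p * 4^p"
  have s0: "0 < s" and s1: "s \<le> 1" using p s by auto
  have K1: "K \<ge> 1"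
  proof -
    have "(1::real) \<le> 4^p" by (simp add: one_le_power)
    moreover have "(1::real) \<le> real p" using p by simp
    ultimately have "1*1 \<le> real p * 4^p" by (intro mult_mono) auto
    then show ?thesis by (simp add: K_def)
  qed
  have nK0: "real (100 * p * 4^p) \<le> real n" using n by (simp only: of_nat_le_iff)
  have nK: "real n \<ge> 100 * K" using nK0 by (simp add: K_def)
  have n100: "real n \<ge> 100" using nK K1 by linarith
  have n3: "3 \<le> n" using n100 by linarith
  have w1: "1 \<le> w" using n100 by (simp add: w_def)
  have wn: "w < real n" by (simp add: w_def)
  have y_def': "y = 2 * w powr s" by (simp add: y_def w_def)
  have wps: "1 \<le> w powr s" using w1 s0 by (intro ge_one_powr_ge_zero) auto
  have y1: "2 \<le> y" using wps by (simp add: y_def')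
  define h where "h = w powr (-s) / 2"
  have hy: "h = 1 / y"
  proof -
    have "w powr s * w powr (-s) = 1" using w1 by (simp flip: powr_add)
    then show ?thesis unfolding h_def y_def' using wps by (simp add: field_simps powr_minus_divide)
  qed
  have hpos: "0 < h" using y1 hy by simp
  note AB = A_bound[OF s0 s1 n3]
  show "summable (\<lambda>k. (-1) ^ k / (real (n + k)) powr s)" by (rule AB(1))
  define A where "A = A_ns n s"
  have b1: "\<bar>A - h\<bar> \<le> 11 * real n powr (-s) / (real n - 1)^2"
    using AB(2) by (simp add: A_def A_ns_def h_def w_def)
  have "real n powr (-s) \<le> w powr (-s)" using wn w1 s0 by (intro powr_mono2') auto
  then have npw: "real n powr (-s) \<le> 2 * h" by (simp add: h_def)
  have "(7::real)^2 \<le> (real n - 1)^2" using n100 by (intro power_mono) auto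
  then have n1: "(real n - 1)^2 \<ge> 44" by simp
  have n1p: "(real n - 1)^2 > 0" using n100 by simp
  define d where "d = 22 * h / (real n - 1)^2"
  have b2: "\<bar>A - h\<bar> \<le> d" unfolding d_def
  proof -
    have "11 * real n powr (-s) / (real n - 1)^2 \<le> 11 * (2 * h) / (real n - 1)^2"
      using npw n1p by (intro divide_right_mono) auto
    then show "\<bar>A - h\<bar> \<le> 22 * h / (real n - 1)^2" using b1 by simp
  qed
  have dh: "d \<le> h / 2" unfolding d_def using n1 n1p hpos by (simp add: divide_simps)
  have Apos: "A \<ge> h/2" using b2 dh by linarith
  have Ah: "A * h \<ge> h * h / 2" using Apos hpos by (simp add: mult_right_mono)
  have "inverse A - y = (h - A) / (A * h)" using hy Apos hpos y1 by (simp add: field_simps)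
  then have "\<bar>inverse A - y\<bar> = \<bar>h - A\<bar> / (A * h)" using Apos hpos by (simp add: abs_mult)
  also have "\<dots> \<le> d / (h * h / 2)"
    using b2 Ah hpos by (intro frac_le) (auto simp: abs_minus_commute)
  also have "\<dots> = E" unfolding d_def E_def using hy hpos n1p by (simp add: field_simps) (use hpos in simp)
  finally show "\<bar>inverse (A_ns n s) - 2 * (real n - 1/2) powr s\<bar> \<le> 44 * (2 * (real n - 1/2) powr s) / (real n - 1)^2"
    by (simp add: A_def E_def y_def)
  have p2: "p \<ge> 2" using p by simp
  have yp_real: "y^p = 2^p * w"
  proof -
    have "(w powr s)^p = w powr (real p * s)" using w1 by (intro powr_power) auto
    also have "real p * s = 1" using s p by simp
    finally have "(w powr s)^p = w" using w1 by simp
    then show ?thesis unfolding y_def' by (simp add: power_mult_distrib)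
  qed
  have yp: "y^p = of_int (2^(p-1) * (2 * int n - 1))"
  proof -
    have "(2::real)^p = 2^(p-1) * 2" using p by (simp flip: power_Suc2)
    then show ?thesis using yp_real by (simp add: w_def field_simps)
  qed
  define G where "G = 1 / (real p * (2*y)^(p-1))"
  have G1: "G \<le> 1"
  proof -
    have "(1::real) \<le> (2*y)^(p-1)" using y1 by (intro one_le_power) auto
    moreover have "(1::real) \<le> real p" using p by simp
    ultimately have "1*1 \<le> real p * (2*y)^(p-1)" by (intro mult_mono) auto
    then show ?thesis unfolding G_def by simp
  qed
  have EG: "E < G"
  proof -
    have yy: "y * (2*y)^(p-1) = 2^(p-1) * y^p"
    proof -
      have "y * y^(p-1) = y^p" using p by (cases p) auto
      then show ?thesis by (simp add: power_mult_distrib mult_ac)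
    qed
    have four: "(2::real)^(p-1) * 2^p = 4^p / 2"
    proof -
      obtain q where q: "p = Suc q" using p by (cases p) auto
      have "(4::real)^q = 2^q*2^q" by (simp flip: power_mult_distrib)
      then show ?thesis unfolding q by simp
    qed
    have "44 * y * (real p * (2*y)^(p-1)) = 44 * real p * (2^(p-1) * y^p)" using yy by (simp add: mult_ac)
    also have "\<dots> = 22 * K * w" unfolding yp_real K_def using four by (simp add: field_simps)
    also have "\<dots> < 22 * K * real n" using wn K1 by simp
    also have "\<dots> \<le> (real n - 1)^2"
    proof -
      have "22 * K * real n \<le> (real n / 4) * real n" using nK n100 by (intro mult_right_mono) auto
      also have "\<dots> \<le> (real n - 1)^2"
      proof -
        have "real n * real n \<ge> 100 * real n" using n100 by (intro mult_right_mono) auto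
        then show ?thesis by (simp add: power2_eq_square algebra_simps)
      qed
      finally show ?thesis .
    qed
    finally have lt: "44 * y * (real p * (2*y)^(p-1)) < (real n - 1)^2" .
    have pp: "0 < real p * (2*y)^(p-1)" using p y1 by simp
    show ?thesis unfolding E_def G_def using lt pp n1p by (simp add: divide_simps mult_ac)
  qed
  show "\<forall>m::int. 44 * (2 * (real n - 1/2) powr s) / (real n - 1)^2 < \<bar>2 * (real n - 1/2) powr s - of_int m\<bar>"
  proof
    fix m :: int
    have "G \<le> \<bar>y - of_int m\<bar>"
    proof (cases "\<bar>y - of_int m\<bar> < 1")
      case True
      show ?thesis unfolding G_def by (rule gap_lemma[OF p2 _ yp True]) (use y1 in simp)
    next
      case False then show ?thesis using G1 by simp
    qed
    then show "44 * (2 * (real n - 1/2) powr s) / (real n - 1)^2 < \<bar>2 * (real n - 1/2) powr s - of_int m\<bar>"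
      using EG by (simp add: E_def y_def)
  qed
qed

theorem corollary3p3:
  fixes p :: nat and s :: real
  assumes "p \<ge> 5" and "s = 1 / real p"
  shows "\<exists>n0 n1 :: nat. n0 > 0 \<and> n1 > 0 \<and>
    (\<forall>n. even n \<and> n \<ge> n0 \<longrightarrow>
        \<lfloor>inverse (A_ns n s)\<rfloor> = \<lfloor>2 * (real n - 1 / 2) powr s\<rfloor>) \<and>
    (\<forall>n. odd n \<and> n \<ge> n1 \<longrightarrow>
        \<lfloor>inverse (B_ns n s)\<rfloor> = \<lfloor>- 2 * (real n - 1 / 2) powr s\<rfloor>)"
proof -
  define N where "N = 100 * p * 4^p"
  have Npos: "N > 0" unfolding N_def using assms by simp
  have MA: "\<lfloor>inverse (A_ns n s)\<rfloor> = \<lfloor>2 * (real n - 1 / 2) powr s\<rfloor>" if "n \<ge> N" for n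
  proof -
    note M = main_est[OF assms that[unfolded N_def]]
    show ?thesis by (rule floor_close[OF M(1) M(2)])
  qed
  have MB: "\<lfloor>inverse (B_ns n s)\<rfloor> = \<lfloor>- 2 * (real n - 1 / 2) powr s\<rfloor>" if "n \<ge> N" for n
  proof -
    note M = main_est[OF assms that[unfolded N_def]]
    define y where "y = 2 * (real n - 1/2) powr s"
    define E where "E = 44 * (2 * (real n - 1/2) powr s) / (real n - 1)^2"
    have "B_ns n s = - A_ns n s"
    proof -
      have "B_ns n s = (\<Sum>k. - ((-1) ^ k / (real (n + k)) powr s))" unfolding B_ns_def by simp
      also have "\<dots> = - A_ns n s" unfolding A_ns_def by (rule suminf_minus[OF M(3)])
      finally show ?thesis .
    qed
    then have iB: "inverse (B_ns n s) = - inverse (A_ns n s)" by simp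
    have g: "\<forall>m::int. E < \<bar>(- y) - of_int m\<bar>"
    proof
      fix m :: int
      have "E < \<bar>y - of_int (- m)\<bar>" using M(1)[rule_format, of "-m"] by (simp add: E_def y_def)
      then show "E < \<bar>(- y) - of_int m\<bar>" by (simp add: abs_minus_commute)
    qed
    have c: "\<bar>(- inverse (A_ns n s)) - (- y)\<bar> \<le> E" using M(2) by (simp add: E_def y_def abs_minus_commute)
    have "\<lfloor>- inverse (A_ns n s)\<rfloor> = \<lfloor>- y\<rfloor>" by (rule floor_close[OF g c])
    then show ?thesis unfolding iB y_def by simp
  qed
  show ?thesis using Npos MA MB by blast
qed

end
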